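(* Let $\ell_1,\dots,\ell_T$ be labels, $v_1,v_2>0$, $1\le i\le j\le T$, and suppose the optimal solution of subproblem $(i,j)$ is constant (hence equal to $r_{i,j}$). Let $0\le\alpha<r_{i,j}$ and consider the augmented subproblem: minimize $J_{i,j}(p_i,\dots,p_j)$ subject to $0\le p_i\le p_{i+1}\le\cdots\le p_j\le\alpha$. Then for every RBPSR $C_\rho$, the constant solution $p_i=\cdots=p_j=\alpha$ minimizes the augmented subproblem.
   Context: A regular binary proper scoring rule (RBPSR) is a function $C_\rho:\{\theta_1,\theta_2\}\times[0,1]\to[0,\infty]$ given by $C_\rho(\theta_1,q)=\int_q^1\frac{\rho(\eta)}{\eta}\,d\eta$ and $C_\rho(\theta_2,q)=\int_0^q\frac{\rho(\eta)}{1-\eta}\,d\eta$, where $\rho$ is a probability distribution on $[0,1]$ (possibly containing Dirac point masses), and these integrals are finite except that $C_\rho(\theta_1,0)$ and $C_\rho(\theta_2,1)$ may equal $\infty$. Given labels $\ell_1,\dots,\ell_T\in\{\theta_1,\theta_2\}$ and weights $v_1,v_2>0$, write $w(\theta_1)=v_1$, $w(\theta_2)=v_2$. For $1\le i\le j\le T$, a solution of subproblem $(i,j)$ is any $p_{i,j}=(p_i,\dots,p_j)\in[0,1]^{j-i+1}$, feasible if $p_i\le\cdots\le p_j$, with objective $J_{i,j}(p_{i,j})=\sum_{t=i}^j w(\ell_t)C_\rho(\ell_t,p_t)$. The optimal solution of subproblem $(i,j)$ is a feasible solution minimizing $J_{i,j}$ among feasible solutions simultaneously for every RBPSR $C_\rho$;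 it is constant if $p_i=\cdots=p_j$. For $i\le j$, $r_{i,j}=\frac{v_1m_{i,j}}{v_1m_{i,j}+v_2n_{i,j}}$, where $m_{i,j},n_{i,j}$ are the numbers of $\theta_1$- and $\theta_2$-labels among $\ell_i,\dots,\ell_j$. *)

theory Defs
  imports "HOL-Probability.Probability"
begin

datatype label = Theta1 | Theta2

text \<open>Convention for point masses: the theta1-integral ranges over [q,1], the theta2-integral
  over [0,q).  The integrand 1/eta (resp. 1/(1-eta)) is taken as infinity at eta = 0
  (resp. eta = 1).\<close>
definition C :: "real measure \<Rightarrow> label \<Rightarrow> real \<Rightarrow> ennreal" where
  "C rho l q = (case l of
      Theta1 \<Rightarrow> (\<integral>\<^sup>+ eta. (if eta = 0 then \<infinity> else ennreal (1 / eta)) * indicator {q..1} eta \<partial>rho)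
    | Theta2 \<Rightarrow> (\<integral>\<^sup>+ eta. (if eta = 1 then \<infinity> else ennreal (1 / (1 - eta))) * indicator {0..<q} eta \<partial>rho))"

definition rbpsr :: "real measure \<Rightarrow> bool" where
  "rbpsr rho \<longleftrightarrow> prob_space rho \<and> sets rho = sets borel \<and> emeasure rho {0..1} = 1
     \<and> (\<forall>q. 0 < q \<and> q \<le> 1 \<longrightarrow> C rho Theta1 q < \<infinity>)
     \<and> (\<forall>q. 0 \<le> q \<and> q < 1 \<longrightarrow> C rho Theta2 q < \<infinity>)"

definition w :: "real \<Rightarrow> real \<Rightarrow> label \<Rightarrow> real" where
  "w v1 v2 l = (case l of Theta1 \<Rightarrow> v1 | Theta2 \<Rightarrow> v2)"

definition J :: "(nat \<Rightarrow> label) \<Rightarrow> real \<Rightarrow> real \<Rightarrow> real measure \<Rightarrow> nat \<Rightarrow> nat \<Rightarrow> (nat \<Rightarrow> real) \<Rightarrow> ennreal" where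
  "J lab v1 v2 rho i j p = (\<Sum>t\<in>{i..j}. ennreal (w v1 v2 (lab t)) * C rho (lab t) (p t))"

definition feasible :: "nat \<Rightarrow> nat \<Rightarrow> (nat \<Rightarrow> real) \<Rightarrow> bool" where
  "feasible i j p \<longleftrightarrow> (\<forall>t\<in>{i..j}. 0 \<le> p t \<and> p t \<le> 1) \<and>
     (\<forall>s\<in>{i..j}. \<forall>t\<in>{i..j}. s \<le> t \<longrightarrow> p s \<le> p t)"

definition optimal :: "(nat \<Rightarrow> label) \<Rightarrow> real \<Rightarrow> real \<Rightarrow> nat \<Rightarrow> nat \<Rightarrow> (nat \<Rightarrow> real) \<Rightarrow> bool" where
  "optimal lab v1 v2 i j p \<longleftrightarrow> feasible i j p \<and>
     (\<forall>rho. rbpsr rho \<longrightarrow> (\<forall>p'. feasible i j p' \<longrightarrow> J lab v1 v2 rho i j p \<le> J lab v1 v2 rho i j p'))"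

definition r :: "(nat \<Rightarrow> label) \<Rightarrow> real \<Rightarrow> real \<Rightarrow> nat \<Rightarrow> nat \<Rightarrow> real" where
  "r lab v1 v2 i j = (let m = card {t\<in>{i..j}. lab t = Theta1}; n = card {t\<in>{i..j}. lab t = Theta2}
     in v1 * real m / (v1 * real m + v2 * real n))"

end

theory Submission
  imports Defs
begin

definition Ck :: "label \<Rightarrow> real \<Rightarrow> real \<Rightarrow> ennreal" where
  "Ck l q eta = (case l of
      Theta1 \<Rightarrow> (if eta = 0 then \<infinity> else ennreal (1 / eta)) * indicator {q..1} eta
    | Theta2 \<Rightarrow> (if eta = 1 then \<infinity> else ennreal (1 / (1 - eta))) * indicator {0..<q} eta)"

definition G :: "(nat \<Rightarrow> label) \<Rightarrow> real \<Rightarrow> real \<Rightarrow> nat \<Rightarrow> nat \<Rightarrow> (nat \<Rightarrow> real) \<Rightarrow> real \<Rightarrow> ennreal" where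
  "G lab v1 v2 i j p eta = (\<Sum>t\<in>{i..j}. ennreal (w v1 v2 (lab t)) * Ck (lab t) (p t) eta)"

lemma Ck_meas[measurable]: "Ck l q \<in> borel_measurable borel"
  unfolding Ck_def by (cases l) (simp_all, measurable)

lemma Ck_meas': "sets rho = sets borel \<Longrightarrow> Ck l q \<in> borel_measurable rho"
  using Ck_meas measurable_cong_sets by blast

lemma C_eq: "C rho l q = (\<integral>\<^sup>+ eta. Ck l q eta \<partial>rho)"
  unfolding C_def Ck_def by (cases l) simp_all

lemma J_eq:
  assumes "sets rho = sets borel"
  shows "J lab v1 v2 rho i j p = (\<integral>\<^sup>+ eta. G lab v1 v2 i j p eta \<partial>rho)"
proof -
  have "J lab v1 v2 rho i j p = (\<Sum>t\<in>{i..j}. \<integral>\<^sup>+ eta. ennreal (w v1 v2 (lab t)) * Ck (lab t) (p t) eta \<partial>rho)"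
    unfolding J_def C_eq by (simp add: nn_integral_cmult Ck_meas'[OF assms])
  also have "\<dots> = (\<integral>\<^sup>+ eta. G lab v1 v2 i j p eta \<partial>rho)"
    unfolding G_def
    by (rule nn_integral_sum[symmetric]) (simp add: measurable_cong_sets[OF assms refl])
  finally show ?thesis .
qed

lemma dirac_rbpsr:
  assumes "0 \<le> eta" "eta \<le> 1"
  shows "rbpsr (return borel eta)"
  unfolding rbpsr_def using assms
  by (auto simp: prob_space_return C_eq nn_integral_return Ck_meas Ck_def indicator_def)

lemma dirac_J:
  "J lab v1 v2 (return borel eta) i j p = G lab v1 v2 i j p eta"
proof -
  have "J lab v1 v2 (return borel eta) i j p = (\<integral>\<^sup>+ x. G lab v1 v2 i j p x \<partial>return borel eta)"
    by (rule J_eq) simp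
  also have "\<dots> = G lab v1 v2 i j p eta"
    unfolding G_def by (rule nn_integral_return) auto
  finally show ?thesis .
qed

lemma hm: "0 \<le> a \<Longrightarrow> 0 \<le> b \<Longrightarrow> ennreal a * ennreal b = ennreal (a * b)"
  by (simp add: ennreal_mult)

lemma pointwise:
  assumes v1: "v1 > 0" and v2: "v2 > 0" and ij: "i \<le> j"
    and opt: "optimal lab v1 v2 i j (\<lambda>_. c)"
    and a0: "0 \<le> alpha" and ar: "alpha < r lab v1 v2 i j"
    and fp: "feasible i j p" and pa: "\<forall>t\<in>{i..j}. p t \<le> alpha"
  shows "G lab v1 v2 i j (\<lambda>_. alpha) eta \<le> G lab v1 v2 i j p eta"
proof -
  define m where "m = card {t\<in>{i..j}. lab t = Theta1}"
  define n where "n = card {t\<in>{i..j}. lab t = Theta2}"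
  have rdef: "r lab v1 v2 i j = v1 * real m / (v1 * real m + v2 * real n)"
    unfolding r_def m_def n_def Let_def by simp
  have mpos: "m > 0"
  proof (rule ccontr)
    assume "\<not> m > 0"
    then have "m = 0" by simp
    then have "r lab v1 v2 i j = 0" using rdef by simp
    then show False using a0 ar by simp
  qed
  have r1: "r lab v1 v2 i j \<le> 1"
  proof -
    have "0 < v1 * real m + v2 * real n" using v1 v2 mpos by (simp add: add_pos_nonneg)
    moreover have "v1 * real m \<le> v1 * real m + v2 * real n" using v2 by simp
    ultimately show ?thesis unfolding rdef by simp
  qed
  show ?thesis
  proof (cases "eta < 0 \<or> alpha \<le> eta")
    case True
    show ?thesis unfolding G_def
    proof (rule sum_mono)
      fix t assume t: "t \<in> {i..j}"
      have "Ck (lab t) alpha eta \<le> Ck (lab t) (p t) eta"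
        using True pa t a0 by (cases "lab t") (auto simp: Ck_def indicator_def; force)+
      then show "ennreal (w v1 v2 (lab t)) * Ck (lab t) alpha eta
          \<le> ennreal (w v1 v2 (lab t)) * Ck (lab t) (p t) eta"
        by (rule mult_left_mono) simp
    qed
  next
    case False
    then have e0: "0 \<le> eta" and ea: "eta < alpha" by auto
    have e1: "eta < 1" using ea ar r1 by simp
    have fc: "feasible i j (\<lambda>_. c)" using opt unfolding optimal_def by blast
    then have c01: "0 \<le> c" "c \<le> 1" using ij unfolding feasible_def by auto
    have "J lab v1 v2 (return borel eta) i j (\<lambda>_. c) \<le> J lab v1 v2 (return borel eta) i j p"
    proof -
      have "\<forall>rho. rbpsr rho \<longrightarrow> (\<forall>p'. feasible i j p' \<longrightarrow> J lab v1 v2 rho i j (\<lambda>_. c) \<le> J lab v1 v2 rho i j p')"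
        using opt unfolding optimal_def by blast
      moreover have "rbpsr (return borel eta)" using dirac_rbpsr e0 e1 by simp
      ultimately show ?thesis using fp by blast
    qed
    then have Gcp: "G lab v1 v2 i j (\<lambda>_. c) eta \<le> G lab v1 v2 i j p eta"
      by (simp add: dirac_J)
    have Ga: "G lab v1 v2 i j (\<lambda>_. alpha) eta
        = (\<Sum>t\<in>{i..j}. ennreal (if lab t = Theta2 then v2 / (1 - eta) else 0))"
      unfolding G_def
    proof (rule sum.cong[OF refl])
      fix t
      show "ennreal (w v1 v2 (lab t)) * Ck (lab t) alpha eta = ennreal (if lab t = Theta2 then v2 / (1 - eta) else 0)"
      proof (cases "lab t")
        case Theta1 then show ?thesis using ea by (simp add: Ck_def indicator_def)
      next
        case Theta2
        have "ennreal v2 * ennreal (1 / (1 - eta)) = ennreal (v2 * (1 / (1 - eta)))"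
          using v2 e1 by (intro hm) auto
        then show ?thesis using Theta2 e0 e1 ea by (simp add: Ck_def indicator_def w_def)
      qed
    qed
    show ?thesis
    proof (cases "eta < c")
      case True
      have "G lab v1 v2 i j (\<lambda>_. c) eta = G lab v1 v2 i j (\<lambda>_. alpha) eta"
        unfolding G_def
        by (rule sum.cong[OF refl]) (use e0 e1 ea True c01 in \<open>auto simp: Ck_def indicator_def split: label.splits\<close>)
      then show ?thesis using Gcp by simp
    next
      case False
      show ?thesis
      proof (cases "eta = 0")
        case True
        obtain t0 where t0: "t0 \<in> {i..j}" "lab t0 = Theta1"
        proof -
          have "{t\<in>{i..j}. lab t = Theta1} \<noteq> {}" using mpos unfolding m_def using card_gt_0_iff by blast
          then show ?thesis using that by blast
        qed
        have c0: "c = 0" using False True c01 by simp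
        have "ennreal (w v1 v2 (lab t0)) * Ck (lab t0) c eta \<le> G lab v1 v2 i j (\<lambda>_. c) eta"
          unfolding G_def using t0 by (intro member_le_sum) auto
        moreover have "ennreal (w v1 v2 (lab t0)) * Ck (lab t0) c eta = \<top>"
          using t0 True c0 v1 by (simp add: Ck_def w_def indicator_def ennreal_mult_eq_top_iff)
        ultimately have "G lab v1 v2 i j (\<lambda>_. c) eta = \<top>" by (simp add: top_unique)
        then show ?thesis using Gcp by (simp add: top_unique)
      next
        case ne0: False
        have Gc: "G lab v1 v2 i j (\<lambda>_. c) eta
          = (\<Sum>t\<in>{i..j}. ennreal (if lab t = Theta1 then v1 / eta else 0))"
          unfolding G_def
        proof (rule sum.cong[OF refl])
          fix t
          show "ennreal (w v1 v2 (lab t)) * Ck (lab t) c eta = ennreal (if lab t = Theta1 then v1 / eta else 0)"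
          proof (cases "lab t")
            case Theta2 then show ?thesis using False by (simp add: Ck_def indicator_def)
          next
            case Theta1
            have "ennreal v1 * ennreal (1 / eta) = ennreal (v1 * (1 / eta))"
              using v1 e0 by (intro hm) auto
            then show ?thesis using Theta1 e0 e1 ne0 False c01 by (simp add: Ck_def indicator_def w_def)
          qed
        qed
        have S: "(\<Sum>t\<in>{i..j}. (if lab t = L then x else 0)) = real (card {t\<in>{i..j}. lab t = L}) * x"
          for L and x :: real
          by (simp add: sum.inter_filter[symmetric])
        have "G lab v1 v2 i j (\<lambda>_. alpha) eta = ennreal (real n * (v2 / (1 - eta)))"
          unfolding Ga using v2 e1 by (subst sum_ennreal) (auto simp: S n_def)
        moreover have "G lab v1 v2 i j (\<lambda>_. c) eta = ennreal (real m * (v1 / eta))"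
          unfolding Gc using v1 e0 by (subst sum_ennreal) (auto simp: S m_def)
        moreover have "real n * (v2 / (1 - eta)) \<le> real m * (v1 / eta)"
        proof -
          have pos: "v1 * real m + v2 * real n > 0" using v1 v2 mpos
            by (simp add: add_pos_nonneg)
          have "eta * (v1 * real m + v2 * real n) < v1 * real m"
          proof -
            have "eta < v1 * real m / (v1 * real m + v2 * real n)" using ea ar unfolding rdef by simp
            then show ?thesis using pos by (simp add: pos_less_divide_eq)
          qed
          then have "eta * (v2 * real n) \<le> (1 - eta) * (v1 * real m)"
            by (simp add: algebra_simps)
          then show ?thesis using e0 ne0 e1 by (simp add: field_simps)
        qed
        ultimately show ?thesis using Gcp by (metis ennreal_leI order_trans)
      qed
    qed
  qed
qed

theorem lemma4p8:
  fixes lab :: "nat \<Rightarrow> label" and v1 v2 alpha :: real and T i j :: nat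
  assumes "v1 > 0" and "v2 > 0" and "1 \<le> i" and "i \<le> j" and "j \<le> T"
    and "\<exists>c. optimal lab v1 v2 i j (\<lambda>_. c)"
    and "0 \<le> alpha" and "alpha < r lab v1 v2 i j"
  shows "\<forall>rho. rbpsr rho \<longrightarrow>
           (\<forall>p. feasible i j p \<and> (\<forall>t\<in>{i..j}. p t \<le> alpha) \<longrightarrow>
              J lab v1 v2 rho i j (\<lambda>_. alpha) \<le> J lab v1 v2 rho i j p)"
proof (intro allI impI)
  fix rho p
  assume rb: "rbpsr rho" and hp: "feasible i j p \<and> (\<forall>t\<in>{i..j}. p t \<le> alpha)"
  obtain c where c: "optimal lab v1 v2 i j (\<lambda>_. c)" using assms(6) by blast
  have sr: "sets rho = sets borel" using rb unfolding rbpsr_def by blast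
  show "J lab v1 v2 rho i j (\<lambda>_. alpha) \<le> J lab v1 v2 rho i j p"
    unfolding J_eq[OF sr]
    by (rule nn_integral_mono) (rule pointwise[OF assms(1,2,4) c assms(7,8)], use hp in auto)
qed

end
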